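(* For any finite graph $G$, if the VC-dimension of the family $\mathcal{M}(G)$ of maximal independent sets of $G$ (as subsets of $V(G)$) is $d\ge 1$, then $d\le\nu_{\mathrm{bi}}(G)$.
   Context: $\mathcal{M}(G)$ is the set system on ground set $V(G)$ consisting of all maximal independent sets of $G$ (it is the dual of the system $\mathcal{B}(G)=\{K_v\}_{v\in V(G)}$, $K_v=$ set of maximal independent sets containing $v$). The VC-dimension of a set system $\mathcal{F}$ on ground set $X$ is the largest $d$ such that some $S\subseteq X$ with $|S|=d$ satisfies: for every $B\subseteq S$ there is $A\in\mathcal{F}$ with $A\cap S=B$. $\nu_{\mathrm{bi}}(G)$ is the largest $t$ such that $G$ has $2t$ distinct vertices $u_1,\dots,u_t,v_1,\dots,v_t$ with $u_iv_j\in E(G)$ iff $i=j$. *)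

theory Defs
  imports Main
begin

definition finite_graph :: "'a set \<Rightarrow> ('a \<Rightarrow> 'a \<Rightarrow> bool) \<Rightarrow> bool" where
  "finite_graph V E \<longleftrightarrow> finite V \<and> (\<forall>x y. E x y \<longrightarrow> E y x) \<and> (\<forall>x. \<not> E x x)
     \<and> (\<forall>x y. E x y \<longrightarrow> x \<in> V \<and> y \<in> V)"

definition independent_set :: "'a set \<Rightarrow> ('a \<Rightarrow> 'a \<Rightarrow> bool) \<Rightarrow> 'a set \<Rightarrow> bool" where
  "independent_set V E I \<longleftrightarrow> I \<subseteq> V \<and> (\<forall>x\<in>I. \<forall>y\<in>I. \<not> E x y)"

definition maximal_independent_set :: "'a set \<Rightarrow> ('a \<Rightarrow> 'a \<Rightarrow> bool) \<Rightarrow> 'a set \<Rightarrow> bool" where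
  "maximal_independent_set V E I \<longleftrightarrow> independent_set V E I \<and>
     (\<forall>J. independent_set V E J \<and> I \<subseteq> J \<longrightarrow> J = I)"

definition MIS_family :: "'a set \<Rightarrow> ('a \<Rightarrow> 'a \<Rightarrow> bool) \<Rightarrow> 'a set set" where
  "MIS_family V E = {I. maximal_independent_set V E I}"

definition shatters :: "'a set set \<Rightarrow> 'a set \<Rightarrow> bool" where
  "shatters F S \<longleftrightarrow> (\<forall>B\<subseteq>S. \<exists>A\<in>F. A \<inter> S = B)"

definition vc_dim :: "'a set \<Rightarrow> 'a set set \<Rightarrow> nat" where
  "vc_dim X F = Max {card S | S. S \<subseteq> X \<and> shatters F S}"

definition nu_bi :: "'a set \<Rightarrow> ('a \<Rightarrow> 'a \<Rightarrow> bool) \<Rightarrow> nat" where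
  "nu_bi V E = Max {t. \<exists>u v :: nat \<Rightarrow> 'a.
      (\<forall>i<t. u i \<in> V \<and> v i \<in> V) \<and>
      inj_on u {..<t} \<and> inj_on v {..<t} \<and> u ` {..<t} \<inter> v ` {..<t} = {} \<and>
      (\<forall>i<t. \<forall>j<t. E (u i) (v j) \<longleftrightarrow> i = j)}"

end

theory Submission
  imports Defs
begin

lemma mis_exists:
  assumes "finite V"
  shows "\<exists>I. maximal_independent_set V E I"
proof -
  let ?C = "{I. independent_set V E I}"
  have fin: "finite (card ` ?C)"
    using assms by (auto simp: independent_set_def intro!: finite_imageI
        intro: finite_subset[of _ "Pow V"])
  have ne: "{} \<in> ?C" by (simp add: independent_set_def)
  obtain I where I: "I \<in> ?C" "\<forall>J\<in>?C. card J \<le> card I"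
  proof -
    have "Max (card ` ?C) \<in> card ` ?C" using fin ne by (intro Max_in) auto
    then obtain I where "I \<in> ?C" "card I = Max (card ` ?C)" by auto
    moreover have "\<forall>J\<in>?C. card J \<le> card I" using fin calculation(2) by auto
    ultimately show ?thesis using that by blast
  qed
  have "maximal_independent_set V E I"
    unfolding maximal_independent_set_def
  proof (intro conjI allI impI)
    show "independent_set V E I" using I by auto
    fix J assume J: "independent_set V E J \<and> I \<subseteq> J"
    have "finite J" using J assms by (auto simp: independent_set_def intro: finite_subset)
    moreover have "card J \<le> card I" using I J by auto
    moreover have "card I \<le> card J" using J \<open>finite J\<close> by (simp add: card_mono)
    ultimately show "J = I" using J by (metis card_subset_eq antisym)
  qed
  then show ?thesis by blast
qed

theorem lemma2p20:
  fixes V :: "'a set" and E :: "'a \<Rightarrow> 'a \<Rightarrow> bool" and d :: nat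
  assumes "finite_graph V E"
    and "d = vc_dim V (MIS_family V E)"
    and "d \<ge> 1"
  shows "d \<le> nu_bi V E"
proof -
  have finV: "finite V" and sym: "\<And>x y. E x y \<Longrightarrow> E y x"
    and inV: "\<And>x y. E x y \<Longrightarrow> x \<in> V \<and> y \<in> V"
    using assms(1) by (auto simp: finite_graph_def)
  let ?F = "MIS_family V E"
  let ?D = "{card S | S. S \<subseteq> V \<and> shatters ?F S}"
  obtain I0 where I0: "maximal_independent_set V E I0" using mis_exists[OF finV] by blast
  have "shatters ?F {}" using I0 by (auto simp: shatters_def MIS_family_def)
  then have "0 \<in> ?D" by (simp add: exI[of _ "{}"])
  moreover have "finite ?D"
  proof -
    have "?D \<subseteq> card ` Pow V" by auto
    then show ?thesis using finV by (meson finite_Pow_iff finite_imageI finite_subset)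
  qed
  ultimately have "Max ?D \<in> ?D" by (intro Max_in) auto
  then obtain S where S: "S \<subseteq> V" "shatters ?F S" "card S = d"
    using assms(2) unfolding vc_dim_def by auto
  have finS: "finite S" using S(1) finV by (rule finite_subset)
  obtain A where A: "A \<in> ?F" "A \<inter> S = S" using S(2) unfolding shatters_def by blast
  have Sind: "\<And>x y. x \<in> S \<Longrightarrow> y \<in> S \<Longrightarrow> \<not> E x y"
  proof -
    fix x y assume xy: "x \<in> S" "y \<in> S"
    have "independent_set V E A" using A(1) by (simp add: MIS_family_def maximal_independent_set_def)
    moreover have "x \<in> A" "y \<in> A" using xy A(2) by blast+
    ultimately show "\<not> E x y" unfolding independent_set_def by blast
  qed
  have key: "\<exists>w. E s w \<and> w \<notin> S \<and> (\<forall>t\<in>S. t \<noteq> s \<longrightarrow> \<not> E t w)" if s: "s \<in> S" for s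
  proof -
    obtain A where A: "A \<in> ?F" "A \<inter> S = S - {s}"
    proof -
      have "S - {s} \<subseteq> S" by blast
      then show ?thesis using S(2) that unfolding shatters_def by blast
    qed
    have mis: "maximal_independent_set V E A" using A by (simp add: MIS_family_def)
    then have Aind: "independent_set V E A" by (simp add: maximal_independent_set_def)
    have sA: "s \<notin> A" using A s by auto
    have "\<exists>w\<in>A. E s w \<or> E w s"
    proof (rule ccontr)
      assume "\<not> ?thesis"
      then have nb: "\<forall>w\<in>A. \<not> E s w \<and> \<not> E w s" by blast
      have sV: "s \<in> V" using s S(1) by blast
      have "independent_set V E (insert s A)"
        unfolding independent_set_def
      proof (intro conjI ballI)
        show "insert s A \<subseteq> V" using Aind sV unfolding independent_set_def by blast
        fix x y assume "x \<in> insert s A" "y \<in> insert s A"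
        then show "\<not> E x y" using nb Aind assms(1) unfolding independent_set_def finite_graph_def
          by (metis insert_iff)
      qed
      moreover have "A \<subseteq> insert s A" by blast
      ultimately have "insert s A = A" using mis unfolding maximal_independent_set_def by blast
      then show False using sA by auto
    qed
    then obtain w where w: "w \<in> A" "E s w" using sym by auto
    have "w \<notin> S" using w Sind s by auto
    moreover have "\<forall>t\<in>S. t \<noteq> s \<longrightarrow> \<not> E t w"
    proof (intro ballI impI)
      fix t assume "t \<in> S" "t \<noteq> s"
      then have "t \<in> A" using A(2) by blast
      then show "\<not> E t w" using w(1) Aind unfolding independent_set_def by blast
    qed
    ultimately show ?thesis using w by blast
  qed
  obtain vf where vf: "\<And>s. s \<in> S \<Longrightarrow> E s (vf s) \<and> vf s \<notin> S \<and> (\<forall>t\<in>S. t \<noteq> s \<longrightarrow> \<not> E t (vf s))"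
  proof -
    have "\<forall>s\<in>S. \<exists>w. E s w \<and> w \<notin> S \<and> (\<forall>t\<in>S. t \<noteq> s \<longrightarrow> \<not> E t w)" using key by (intro ballI)
    from bchoice[OF this] obtain f where "\<forall>s\<in>S. E s (f s) \<and> f s \<notin> S \<and> (\<forall>t\<in>S. t \<noteq> s \<longrightarrow> \<not> E t (f s))" by (elim exE)
    then show ?thesis using that by blast
  qed
  obtain u where u: "bij_betw u {0..<card S} S" using ex_bij_betw_nat_finite[OF finS] by blast
  define v where "v = (\<lambda>i. vf (u i))"
  have uS: "\<And>i. i < d \<Longrightarrow> u i \<in> S" using u S(3) by (auto simp: bij_betw_def)
  have injU: "inj_on u {..<d}" using u S(3) by (auto simp: bij_betw_def atLeast0LessThan)
  have Eiff: "\<forall>i<d. \<forall>j<d. E (u i) (v j) \<longleftrightarrow> i = j"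
  proof (intro allI impI)
    fix i j assume ij: "i < d" "j < d"
    show "E (u i) (v j) \<longleftrightarrow> i = j"
    proof
      assume "E (u i) (v j)"
      moreover have "\<forall>t\<in>S. t \<noteq> u j \<longrightarrow> \<not> E t (v j)" using vf[OF uS[OF ij(2)]] unfolding v_def by simp
      ultimately have "u i = u j" using uS[OF ij(1)] by blast
      then show "i = j" using injU ij by (auto dest: inj_onD)
    next
      assume "i = j" then show "E (u i) (v j)" using vf[OF uS[OF ij(1)]] by (simp add: v_def)
    qed
  qed
  have injV: "inj_on v {..<d}"
  proof (rule inj_onI)
    fix i j assume "i \<in> {..<d}" "j \<in> {..<d}" "v i = v j"
    then have i: "i < d" and j: "j < d" and eq: "v i = v j" by auto
    have "E (u i) (v i)" using Eiff i by blast
    then have "E (u i) (v j)" using eq by simp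
    then show "i = j" using Eiff i j by blast
  qed
  have disj: "u ` {..<d} \<inter> v ` {..<d} = {}"
  proof (rule ccontr)
    assume "u ` {..<d} \<inter> v ` {..<d} \<noteq> {}"
    then obtain i j where ij: "i < d" "j < d" "u i = v j" by blast
    have "u i \<in> S" using uS ij(1) by blast
    moreover have "v j \<notin> S" using vf[OF uS[OF ij(2)]] unfolding v_def by blast
    ultimately show False using ij(3) by simp
  qed
  have inVV: "\<forall>i<d. u i \<in> V \<and> v i \<in> V"
  proof (intro allI impI)
    fix i assume i: "i < d"
    have "u i \<in> V" using uS[OF i] S(1) by blast
    moreover have "E (u i) (v i)" using vf[OF uS[OF i]] unfolding v_def by simp
    ultimately show "u i \<in> V \<and> v i \<in> V" using inV by blast
  qed
  let ?T = "{t. \<exists>u v :: nat \<Rightarrow> 'a.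
      (\<forall>i<t. u i \<in> V \<and> v i \<in> V) \<and>
      inj_on u {..<t} \<and> inj_on v {..<t} \<and> u ` {..<t} \<inter> v ` {..<t} = {} \<and>
      (\<forall>i<t. \<forall>j<t. E (u i) (v j) \<longleftrightarrow> i = j)}"
  have dT: "d \<in> ?T" unfolding mem_Collect_eq
    by (rule exI[of _ u], rule exI[of _ v],
        rule conjI[OF inVV conjI[OF injU conjI[OF injV conjI[OF disj Eiff]]]])
  have bnd: "\<And>t. t \<in> ?T \<Longrightarrow> t \<le> card V"
  proof -
    fix t assume "t \<in> ?T"
    then obtain u' v' where "(\<forall>i<t. u' i \<in> V \<and> v' i \<in> V) \<and>
      inj_on u' {..<t} \<and> inj_on v' {..<t} \<and> u' ` {..<t} \<inter> v' ` {..<t} = {} \<and>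
      (\<forall>i<t. \<forall>j<t. E (u' i) (v' j) \<longleftrightarrow> i = j)" unfolding mem_Collect_eq by (elim exE)
    then have u': "\<forall>i<t. u' i \<in> V" "inj_on u' {..<t}" by (elim conjE, simp)+
    have c: "card (u' ` {..<t}) = t" using card_image[OF u'(2)] by simp
    have "u' ` {..<t} \<subseteq> V" using u'(1) by auto
    then have "card (u' ` {..<t}) \<le> card V" using finV by (rule card_mono[rotated])
    then show "t \<le> card V" using c by simp
  qed
  have "\<forall>n\<in>?T. n \<le> card V" by (intro ballI bnd)
  then have "finite ?T" unfolding finite_nat_set_iff_bounded_le by (rule exI)
  then have "d \<le> Max ?T" using dT by (rule Max_ge)
  then show ?thesis unfolding nu_bi_def .
qed

end
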